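(* Let $T$ be a $C_{p^rq^s}$-transfer system with exactly two connected components. Then the connected component of $(0,0)$ is either $V_\ell$ for some $0\le\ell<r$, or $H_k$ for some $0\le k<s$, or $L_{(\ell,k)}$ for some $0\le \ell<r$ and $0\le k<s$.
   Context: $p,q$ are distinct primes and $r,s\ge 0$ integers. The subgroups of $C_{p^rq^s}$ are identified with grid points $(i,j)$, $0\le i\le r$, $0\le j\le s$, where $(i,j)$ stands for $C_{p^iq^j}$. A $C_{p^rq^s}$-transfer system is a partial order $\to$ on these vertices such that: $(i_1,j_1)\to(i_2,j_2)$ implies $i_1\le i_2$, $j_1\le j_2$; it is reflexive and transitive; and $(i_1,j_1)\to(i_2,j_2)$ implies $(\min\{i_1,a\},\min\{j_1,b\})\to(\min\{i_2,a\},\min\{j_2,b\})$ for every vertex $(a,b)$. Connected components are those of the underlying undirected graph. Define $V_\ell=\{(i,j): 0\le i\le \ell,\ 0\le j\le s\}$ (for $\ell<r$), $H_k=\{(i,j): 0\le i\le r,\ 0\le j\le k\}$ (for $k<s$), and $L_{(\ell,k)}=V_\ell\cup H_k$. *)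

theory Defs
  imports "HOL-Computational_Algebra.Primes"
begin

text \<open>Subgroups of the cyclic group of order p^r q^s, identified with grid points (i,j),
  where (i,j) stands for the subgroup of order p^i q^j.\<close>
definition grid :: "nat \<Rightarrow> nat \<Rightarrow> (nat \<times> nat) set" where
  "grid r s = {0..r} \<times> {0..s}"

text \<open>A transfer system: a partial order (reflexive, antisymmetric, transitive relation)
  on the grid, refining the componentwise order, and closed under restriction
  (taking componentwise minima with any vertex (a,b)).\<close>
definition transfer_system :: "nat \<Rightarrow> nat \<Rightarrow> ((nat \<times> nat) \<times> (nat \<times> nat)) set \<Rightarrow> bool" where
  "transfer_system r s T \<longleftrightarrow>
     T \<subseteq> grid r s \<times> grid r s \<and>
     (\<forall>v\<in>grid r s. (v, v) \<in> T) \<and>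
     antisym T \<and> trans T \<and>
     (\<forall>i1 j1 i2 j2. ((i1, j1), (i2, j2)) \<in> T \<longrightarrow> i1 \<le> i2 \<and> j1 \<le> j2) \<and>
     (\<forall>i1 j1 i2 j2 a b. ((i1, j1), (i2, j2)) \<in> T \<longrightarrow> (a, b) \<in> grid r s \<longrightarrow>
        ((min i1 a, min j1 b), (min i2 a, min j2 b)) \<in> T)"

definition component :: "((nat \<times> nat) \<times> (nat \<times> nat)) set \<Rightarrow> nat \<times> nat \<Rightarrow> (nat \<times> nat) set" where
  "component T v = {w. (v, w) \<in> (T \<union> T\<inverse>)\<^sup>*}"

definition components :: "nat \<Rightarrow> nat \<Rightarrow> ((nat \<times> nat) \<times> (nat \<times> nat)) set \<Rightarrow> (nat \<times> nat) set set" where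
  "components r s T = component T ` grid r s"

definition Vset :: "nat \<Rightarrow> nat \<Rightarrow> (nat \<times> nat) set" where
  "Vset s l = {(i, j). i \<le> l \<and> j \<le> s}"

definition Hset :: "nat \<Rightarrow> nat \<Rightarrow> (nat \<times> nat) set" where
  "Hset r k = {(i, j). i \<le> r \<and> j \<le> k}"

definition Lset :: "nat \<Rightarrow> nat \<Rightarrow> nat \<Rightarrow> nat \<Rightarrow> (nat \<times> nat) set" where
  "Lset r s l k = Vset s l \<union> Hset r k"

end

theory Submission
  imports Defs
begin

definition mn :: "nat \<times> nat \<Rightarrow> nat \<times> nat \<Rightarrow> nat \<times> nat" where
  "mn x m = (min (fst x) (fst m), min (snd x) (snd m))"

lemma restrict_R:
  assumes ts: "transfer_system r s T" and m: "m \<in> grid r s"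
    and xy: "(x, y) \<in> (T \<union> T\<inverse>)\<^sup>*"
  shows "(mn x m, mn y m) \<in> (T \<union> T\<inverse>)\<^sup>*"
  using xy
proof (induction rule: rtrancl_induct)
  case base
  then show ?case by simp
next
  case (step y z)
  have cl: "\<And>u v. (u, v) \<in> T \<Longrightarrow> (mn u m, mn v m) \<in> T"
  proof -
    fix u v assume "(u, v) \<in> T"
    then show "(mn u m, mn v m) \<in> T"
      using ts m unfolding transfer_system_def mn_def
      by (cases u; cases v; cases m) auto
  qed
  from step(2) have "(mn y m, mn z m) \<in> T \<union> T\<inverse>" using cl[of y z] cl[of z y] by blast
  with step(3) show ?case by (meson rtrancl.rtrancl_into_rtrancl)
qed

lemma R_sym:
  assumes "(x, y) \<in> (S \<union> S\<inverse>)\<^sup>*" shows "(y, x) \<in> (S \<union> S\<inverse>)\<^sup>*"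
proof -
  have "(y, x) \<in> ((S \<union> S\<inverse>)\<^sup>*)\<inverse>" using assms by simp
  also have "((S \<union> S\<inverse>)\<^sup>*)\<inverse> = ((S \<union> S\<inverse>)\<inverse>)\<^sup>*" by (simp add: rtrancl_converse)
  also have "(S \<union> S\<inverse>)\<inverse> = S \<union> S\<inverse>" by auto
  finally show ?thesis .
qed

theorem mainTheorem13:
  fixes p q r s :: nat
    and T :: "((nat \<times> nat) \<times> (nat \<times> nat)) set"
  assumes "prime p" and "prime q" and "p \<noteq> q"
    and "transfer_system r s T"
    and "card (components r s T) = 2"
  shows "(\<exists>l<r. component T (0, 0) = Vset s l) \<or>
         (\<exists>k<s. component T (0, 0) = Hset r k) \<or>
         (\<exists>l<r. \<exists>k<s. component T (0, 0) = Lset r s l k)"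
proof -
  note ts = assms(4)
  define R where "R = (T \<union> T\<inverse>)\<^sup>*"
  define C0 where "C0 = component T (0, 0)"
  have Tg: "T \<subseteq> grid r s \<times> grid r s" using ts unfolding transfer_system_def by blast
  have g00: "(0, 0) \<in> grid r s" by (simp add: grid_def)
  have C0g: "C0 \<subseteq> grid r s"
  proof
    fix w assume "w \<in> C0"
    then have "((0,0), w) \<in> R" by (simp add: C0_def component_def R_def)
    then show "w \<in> grid r s" unfolding R_def
    proof (induction rule: rtrancl_induct)
      case base then show ?case using g00 by simp
    next
      case (step y z) then show ?case using Tg by auto
    qed
  qed
  have comp_eq: "component T x = component T y" if "(x, y) \<in> R" for x y
  proof -
    have "(y, x) \<in> R" using R_sym[of x y T] that unfolding R_def .
    have 1: "(x, w) \<in> R" if "(y, w) \<in> R" for w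
      using \<open>(x, y) \<in> R\<close> that unfolding R_def by (rule rtrancl_trans)
    have 2: "(y, w) \<in> R" if "(x, w) \<in> R" for w
      using \<open>(y, x) \<in> R\<close> that unfolding R_def by (rule rtrancl_trans)
    show ?thesis unfolding component_def R_def[symmetric] using 1 2 by blast
  qed
  have selfc: "x \<in> component T x" for x by (simp add: component_def)
  have inC0: "x \<in> C0 \<longleftrightarrow> component T x = C0" for x
  proof
    assume "x \<in> C0" then show "component T x = C0"
      using comp_eq unfolding C0_def component_def R_def by (metis mem_Collect_eq)
  next
    assume "component T x = C0" then show "x \<in> C0" using selfc by metis
  qed
  define D where "D = {x \<in> grid r s. x \<notin> C0}"
  have fin: "finite (components r s T)" using \<open>card (components r s T) = 2\<close>
    by (metis card.infinite zero_neq_numeral)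
  have C0c: "C0 \<in> components r s T" using g00 by (simp add: components_def C0_def)
  have Dne: "D \<noteq> {}"
  proof
    assume "D = {}"
    then have "components r s T \<subseteq> {C0}" unfolding components_def D_def
      using inC0 by auto
    then have "card (components r s T) \<le> card {C0}" by (intro card_mono) auto
    with assms(5) show False by simp
  qed
  have Dcon: "(x, y) \<in> R" if "x \<in> D" "y \<in> D" for x y
  proof -
    have cx: "component T x \<in> components r s T" "component T y \<in> components r s T"
      using that by (auto simp: components_def D_def)
    have nx: "component T x \<noteq> C0" "component T y \<noteq> C0" using that inC0 by (auto simp: D_def)
    have "component T x = component T y"
    proof (rule ccontr)
      assume ne: "component T x \<noteq> component T y"
      have "{C0, component T x, component T y} \<subseteq> components r s T" using cx C0c by auto
      then have "card {C0, component T x, component T y} \<le> 2"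
        using fin assms(5) by (metis card_mono)
      moreover have "card {C0, component T x, component T y} = 3" using ne nx by auto
      ultimately show False by simp
    qed
    then show ?thesis using selfc[of y] unfolding component_def R_def by auto
  qed
  have down: "v \<in> C0" if "w \<in> C0" "v \<in> grid r s" "fst v \<le> fst w" "snd v \<le> snd w" for v w
  proof -
    have "((0,0), w) \<in> R" using that by (simp add: C0_def component_def R_def)
    from restrict_R[OF ts that(2) this[unfolded R_def]]
    have "(mn (0,0) v, mn w v) \<in> R" by (simp add: R_def)
    moreover have "mn (0,0) v = (0,0)" "mn w v = v" using that by (auto simp: mn_def)
    ultimately show ?thesis by (simp add: C0_def component_def R_def)
  qed
  have meet: "mn y x \<in> D" if "x \<in> D" "y \<in> D" for x y
  proof -
    have "(x, y) \<in> R" using Dcon that by blast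
    from restrict_R[OF ts _ this[unfolded R_def], of x] that
    have "(mn x x, mn y x) \<in> R" by (simp add: R_def D_def)
    then have xm: "(x, mn y x) \<in> R" by (simp add: mn_def)
    have mg: "mn y x \<in> grid r s" using that by (auto simp: D_def grid_def mn_def)
    show ?thesis
    proof (rule ccontr)
      assume "mn y x \<notin> D"
      then have "mn y x \<in> C0" using mg by (simp add: D_def)
      then have "((0,0), mn y x) \<in> R" by (simp add: C0_def component_def R_def)
      moreover have "(mn y x, x) \<in> R" using R_sym[of x "mn y x" T] xm unfolding R_def .
      ultimately have "((0,0), x) \<in> R" unfolding R_def by (rule rtrancl_trans)
      then have "x \<in> C0" unfolding C0_def component_def R_def by simp
      then show False using that by (simp add: D_def)
    qed
  qed
  have finD: "finite D" unfolding D_def grid_def by auto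
  define a where "a = Min (fst ` D)"
  define b where "b = Min (snd ` D)"
  obtain x where x: "x \<in> D" "fst x = a" unfolding a_def
    using finD Dne by (metis (mono_tags, lifting) Min_in empty_is_image finite_imageI imageE)
  obtain y where y: "y \<in> D" "snd y = b" unfolding b_def
    using finD Dne by (metis (mono_tags, lifting) Min_in empty_is_image finite_imageI imageE)
  have ale: "a \<le> fst z" "b \<le> snd z" if "z \<in> D" for z
    using that finD by (auto simp: a_def b_def)
  have "mn y x = (a, b)" using ale[OF x(1)] ale[OF y(1)] x y by (auto simp: mn_def)
  then have abD: "(a, b) \<in> D" using meet[OF x(1) y(1)] by simp
  have Deq: "D = {z \<in> grid r s. a \<le> fst z \<and> b \<le> snd z}"
  proof
    show "D \<subseteq> {z \<in> grid r s. a \<le> fst z \<and> b \<le> snd z}" using ale by (auto simp: D_def)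
  next
    show "{z \<in> grid r s. a \<le> fst z \<and> b \<le> snd z} \<subseteq> D"
    proof
      fix z assume z: "z \<in> {z \<in> grid r s. a \<le> fst z \<and> b \<le> snd z}"
      show "z \<in> D"
      proof (rule ccontr)
        assume "z \<notin> D"
        then have "z \<in> C0" using z by (simp add: D_def)
        then have "(a,b) \<in> C0" using down[of z "(a,b)"] abD z by (auto simp: D_def)
        then show False using abD by (simp add: D_def)
      qed
    qed
  qed
  have C0eq: "C0 = {z \<in> grid r s. fst z < a \<or> snd z < b}"
  proof
    show "C0 \<subseteq> {z \<in> grid r s. fst z < a \<or> snd z < b}" using Deq C0g unfolding D_def by auto
  next
    show "{z \<in> grid r s. fst z < a \<or> snd z < b} \<subseteq> C0"
    proof
      fix z assume z: "z \<in> {z \<in> grid r s. fst z < a \<or> snd z < b}"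
      then have "z \<notin> D" unfolding Deq by auto
      then show "z \<in> C0" using z unfolding D_def by auto
    qed
  qed
  have ab: "a \<le> r" "b \<le> s" using abD by (auto simp: D_def grid_def)
  have ab0: "(a, b) \<noteq> (0, 0)"
  proof
    assume "(a, b) = (0, 0)"
    then have "(a, b) \<in> C0" using selfc by (simp add: C0_def)
    then show False using abD by (simp add: D_def)
  qed
  show ?thesis
  proof (cases "a = 0")
    case True
    then have "b > 0" using ab0 by simp
    have "C0 = Hset r (b - 1)" unfolding C0eq Hset_def grid_def using True \<open>b > 0\<close> ab
      by auto
    then show ?thesis using \<open>b > 0\<close> ab unfolding C0_def by (intro disjI2 disjI1 exI[of _ "b - 1"]) auto
  next
    case False
    show ?thesis
    proof (cases "b = 0")
      case True
      have "C0 = Vset s (a - 1)" unfolding C0eq Vset_def grid_def using True False ab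
        by auto
      then show ?thesis using False ab unfolding C0_def
        by (intro disjI1 exI[of _ "a - 1"]) auto
    next
      case b: False
      have "C0 = Lset r s (a - 1) (b - 1)" unfolding C0eq Lset_def Vset_def Hset_def grid_def
        using b False ab by auto
      then show ?thesis using False b ab unfolding C0_def
        by (intro disjI2 exI[of _ "a - 1"] exI[of _ "b - 1"] conjI) auto
    qed
  qed
qed

end
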